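(* There exists an absolute constant $0<c\le\tfrac12$ such that for every $q\in(0,\tfrac12)$, every positive integer $m$ and every integer $n>1$, \[ \mathbb{P}(\tau'_m\ge n^2)\ge 1-e^{-cm/n}. \]
   Context: Fix $q\in(0,1/2)$. Let $Y_1,Y_2,\dots$ be i.i.d. with $\mathbb{P}(Y_i=1)=\mathbb{P}(Y_i=-1)=q$ and $\mathbb{P}(Y_i=0)=1-2q$, and $T_j=Y_1+\cdots+Y_j$ (the lazy simple random walk with parameter $q$). For a nonzero integer $m$, $\tau'_m$ is the smallest positive integer $t$ with $T_t=m$. *)

theory Defs
  imports "HOL-Probability.Probability"
begin

text \<open>Step distribution of the lazy simple random walk with parameter q:
  P(Y=1) = P(Y=-1) = q, P(Y=0) = 1 - 2q (meaningful for 0 < q < 1/2).\<close>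
definition lazy_step :: "real \<Rightarrow> int pmf" where
  "lazy_step q = embed_pmf (\<lambda>x::int. if x = 1 \<or> x = -1 then q else if x = 0 then 1 - 2*q else 0)"

text \<open>Probability space of the i.i.d. sequence Y_1, Y_2, ... (stream index 0 is Y_1).\<close>
definition lazy_walk_space :: "real \<Rightarrow> int stream measure" where
  "lazy_walk_space q = stream_space (measure_pmf (lazy_step q))"

definition walk :: "int stream \<Rightarrow> nat \<Rightarrow> int" where
  "walk \<omega> j = sum_list (stake j \<omega>)"

definition hit_time :: "int \<Rightarrow> int stream \<Rightarrow> enat" where
  "hit_time m \<omega> = (if \<exists>t>0. walk \<omega> t = m
                    then enat (LEAST t. t > 0 \<and> walk \<omega> t = m) else \<infinity>)"

end

theory Submission
  imports Defs
begin

definition stepf :: "real \<Rightarrow> int \<Rightarrow> real" where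
  "stepf q = (\<lambda>x::int. if x = 1 \<or> x = -1 then q else if x = 0 then 1 - 2*q else 0)"

lemma pmf_lazy_step:
  assumes "0 \<le> q" "q \<le> 1/2"
  shows "pmf (lazy_step q) x = stepf q x"
proof -
  have nn: "\<And>x. 0 \<le> stepf q x" using assms by (auto simp: stepf_def)
  have "(\<integral>\<^sup>+x. ennreal (stepf q x) \<partial>count_space UNIV) = (\<Sum>x\<in>{-1,0,1}. ennreal (stepf q x))"
    by (rule nn_integral_count_space') (auto simp: stepf_def)
  also have "\<dots> = ennreal (\<Sum>x\<in>{-1,0,1}. stepf q x)"
    using nn by (subst sum_ennreal) auto
  also have "(\<Sum>x\<in>{-1,0,1::int}. stepf q x) = 1" by (simp add: stepf_def)
  finally have "(\<integral>\<^sup>+x. ennreal (stepf q x) \<partial>count_space UNIV) = 1" by simp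
  then show ?thesis unfolding lazy_step_def stepf_def[symmetric]
    using pmf_embed_pmf[of "stepf q"] nn by blast
qed

lemma set_lazy_step:
  assumes "0 \<le> q" "q \<le> 1/2"
  shows "set_pmf (lazy_step q) \<subseteq> {-1,0,1}"
  using pmf_lazy_step[OF assms] by (auto simp: set_pmf_eq stepf_def)

definition AK :: "nat \<Rightarrow> int \<Rightarrow> int stream set" where
  "AK K a = {\<omega>. \<forall>t\<le>K. walk \<omega> t < a}"

lemma walk_meas: "(\<lambda>\<omega>. walk \<omega> t) \<in> measurable (stream_space (measure_pmf p)) (count_space UNIV)"
  unfolding walk_def by measurable

lemma AK_sets: "AK K a \<in> sets (stream_space (measure_pmf p))"
proof -
  have "AK K a = {\<omega> \<in> space (stream_space (measure_pmf p)). \<forall>t\<le>K. walk \<omega> t < a}"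
    by (auto simp: AK_def space_stream_space)
  also have "\<dots> \<in> sets (stream_space (measure_pmf p))"
    using walk_meas by measurable
  finally show ?thesis .
qed

lemma walk_0[simp]: "walk \<omega> 0 = 0" by (simp add: walk_def)
lemma walk_Suc_Cons[simp]: "walk (x ## \<omega>) (Suc t) = x + walk \<omega> t" by (simp add: walk_def)

lemma AK_0: "AK 0 a = (if 0 < a then UNIV else {})"
  by (auto simp: AK_def)

lemma AK_Suc: "{\<omega>. x ## \<omega> \<in> AK (Suc K) a} = (if 0 < a then AK K (a - x) else {})"
proof -
  have "x ## \<omega> \<in> AK (Suc K) a \<longleftrightarrow> 0 < a \<and> \<omega> \<in> AK K (a - x)" for \<omega>
  proof -
    have "x ## \<omega> \<in> AK (Suc K) a \<longleftrightarrow> (\<forall>t\<le>Suc K. walk (x ## \<omega>) t < a)" by (simp add: AK_def)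
    also have "\<dots> \<longleftrightarrow> walk (x ## \<omega>) 0 < a \<and> (\<forall>t\<le>K. walk (x ## \<omega>) (Suc t) < a)"
      by (metis Suc_le_mono not0_implies_Suc le0)
    also have "\<dots> \<longleftrightarrow> 0 < a \<and> \<omega> \<in> AK K (a - x)" by (auto simp: AK_def)
    finally show ?thesis .
  qed
  then show ?thesis by auto
qed

definition pK :: "real \<Rightarrow> nat \<Rightarrow> int \<Rightarrow> real" where
  "pK q K a = measure (lazy_walk_space q) (AK K a)"

lemma pK_0: "pK q 0 a = (if 0 < a then 1 else 0)"
proof -
  interpret S: prob_space "lazy_walk_space q" unfolding lazy_walk_space_def
    by (rule prob_space.prob_space_stream_space) (rule prob_space_measure_pmf)
  show ?thesis unfolding pK_def AK_0 
    using S.prob_space by (auto simp: lazy_walk_space_def space_stream_space)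
qed

lemma pK_Suc:
  assumes "0 \<le> q" "q \<le> 1/2"
  shows "pK q (Suc K) a = (if 0 < a then q * pK q K (a+1) + (1-2*q) * pK q K a + q * pK q K (a - 1) else 0)"
proof -
  let ?M = "measure_pmf (lazy_step q)"
  let ?S = "stream_space ?M"
  interpret M: prob_space ?M by (rule prob_space_measure_pmf)
  interpret S: prob_space ?S by (rule prob_space.prob_space_stream_space[OF prob_space_measure_pmf])
  have sp: "space ?S = UNIV" by (simp add: space_stream_space)
  have "emeasure ?S (AK (Suc K) a) = (\<integral>\<^sup>+t. emeasure ?S {x\<in>space ?S. t ## x \<in> AK (Suc K) a} \<partial>?M)"
    by (rule prob_space.emeasure_stream_space[OF prob_space_measure_pmf]) (rule AK_sets)
  also have "\<dots> = (\<integral>\<^sup>+t. (if 0 < a then ennreal (pK q K (a - t)) else 0) \<partial>?M)"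
    using AK_Suc[of _ K a] by (auto simp: sp pK_def lazy_walk_space_def S.emeasure_eq_measure intro!: nn_integral_cong)
  also have "\<dots> = (\<Sum>t\<in>{-1,0,1}. (if 0 < a then ennreal (pK q K (a - t)) else 0) * pmf (lazy_step q) t)"
    using set_lazy_step[OF assms] by (intro nn_integral_measure_pmf_support) auto
  also have "\<dots> = (\<Sum>t\<in>{-1,0,1}. ennreal ((if 0 < a then pK q K (a - t) else 0) * stepf q t))"
    using assms by (intro sum.cong refl) (auto simp: pmf_lazy_step pK_def ennreal_mult stepf_def)
  also have "\<dots> = ennreal (\<Sum>t\<in>{-1,0,1}. (if 0 < a then pK q K (a - t) else 0) * stepf q t)"
    using assms by (intro sum_ennreal) (auto simp: pK_def stepf_def)
  also have "(\<Sum>t\<in>{-1,0,1::int}. (if 0 < a then pK q K (a - t) else 0) * stepf q t) =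
     (if 0 < a then q * pK q K (a+1) + (1-2*q) * pK q K a + q * pK q K (a - 1) else 0)"
    by (simp add: stepf_def algebra_simps)
  finally show ?thesis
    unfolding pK_def lazy_walk_space_def S.emeasure_eq_measure
    using assms by (auto simp: pK_def lazy_walk_space_def intro!: add_nonneg_nonneg mult_nonneg_nonneg)
qed

lemma compare:
  assumes q: "0 \<le> q" "q \<le> 1/2"
    and g0: "\<And>a. g 0 a \<le> 1"
    and gneg: "\<And>k a. a \<le> 0 \<Longrightarrow> g k a \<le> 0"
    and gstep: "\<And>k a. 0 < a \<Longrightarrow> g (Suc k) a \<le> q * g k (a+1) + (1-2*q) * g k a + q * g k (a-1)"
  shows "g K a \<le> pK q K a"
proof (induction K arbitrary: a)
  case 0
  then show ?case using g0 gneg[of a 0] by (auto simp: pK_0)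
next
  case (Suc K)
  show ?case
  proof (cases "0 < a")
    case False
    then show ?thesis using gneg[of a "Suc K"] pK_Suc[OF q] by auto
  next
    case True
    have "g (Suc K) a \<le> q * g K (a+1) + (1-2*q) * g K a + q * g K (a-1)" using gstep True by blast
    also have "\<dots> \<le> q * pK q K (a+1) + (1-2*q) * pK q K a + q * pK q K (a-1)"
      using q Suc.IH by (intro add_mono mult_left_mono) auto
    finally show ?thesis using pK_Suc[OF q] True by simp
  qed
qed

lemma cos_lb: "1 - x^2/2 \<le> cos (x::real)"
proof -
  have "cos x = cos (2 * (x/2))" by simp
  also have "\<dots> = 1 - 2 * sin (x/2) ^ 2" by (rule cos_double_sin)
  finally have e: "cos x = 1 - 2 * sin (x/2) ^ 2" .
  have "sin (x/2) ^ 2 \<le> (x/2)^2"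
    using abs_sin_x_le_abs_x[of "x/2"] by (metis abs_le_square_iff)
  then show ?thesis using e by (simp add: power_divide)
qed

lemma sin_lb:
  assumes "0 \<le> x" "x \<le> 1"
  shows "x/2 \<le> sin (x::real)"
proof -
  have "(\<lambda>y. sin y - y/2) 0 \<le> (\<lambda>y. sin y - y/2) x"
  proof (rule DERIV_nonneg_imp_nondecreasing[OF assms(1)])
    fix y :: real assume y: "0 \<le> y" "y \<le> x"
    have "1 - y^2/2 \<le> cos y" by (rule cos_lb)
    moreover have "y^2 \<le> 1" using y assms by (simp add: power_le_one)
    ultimately have "0 \<le> cos y - 1/2" by simp
    moreover have "((\<lambda>y. sin y - y/2) has_real_derivative (cos y - 1/2)) (at y)"
      by (auto intro!: derivative_eq_intros)
    ultimately show "\<exists>d. ((\<lambda>y. sin y - y/2) has_real_derivative d) (at y) \<and> 0 \<le> d" by blast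
  qed
  then show ?thesis by simp
qed

lemma exp_sum_bound:
  assumes "0 \<le> x" "x \<le> 1"
  shows "exp x + exp (-x) - 2 \<le> 2 * (x::real)^2"
proof -
  have "exp x \<le> 1 + x + x^2" by (rule exp_bound[OF assms])
  moreover have "exp (-x) \<le> 1 - x + x^2"
  proof -
    have "1 \<le> (1 + x) * (1 - x + x^2)" using assms by (simp add: algebra_simps power2_eq_square power3_eq_cube)
    also have "\<dots> \<le> exp x * (1 - x + x^2)"
      using assms by (intro mult_right_mono) (auto intro: add_nonneg_nonneg)
    finally have "1 \<le> exp x * (1 - x + x^2)" .
    then show ?thesis by (simp add: exp_minus field_simps)
  qed
  ultimately show ?thesis by simp
qed

lemma hit_iff: "enat N \<le> hit_time m \<omega> \<longleftrightarrow> (\<forall>t. 0 < t \<and> t < N \<longrightarrow> walk \<omega> t \<noteq> m)"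
proof
  assume h: "enat N \<le> hit_time m \<omega>"
  show "\<forall>t. 0 < t \<and> t < N \<longrightarrow> walk \<omega> t \<noteq> m"
  proof (intro allI impI notI)
    fix t assume t: "0 < t \<and> t < N" and w: "walk \<omega> t = m"
    then have ex: "\<exists>t>0. walk \<omega> t = m" by blast
    have "(LEAST t. t > 0 \<and> walk \<omega> t = m) \<le> t" using t w by (intro Least_le) auto
    then show False using h t ex by (auto simp: hit_time_def)
  qed
next
  assume h: "\<forall>t. 0 < t \<and> t < N \<longrightarrow> walk \<omega> t \<noteq> m"
  show "enat N \<le> hit_time m \<omega>"
  proof (cases "\<exists>t>0. walk \<omega> t = m")
    case True
    then have "(LEAST t. t > 0 \<and> walk \<omega> t = m) > 0 \<and> walk \<omega> (LEAST t. t > 0 \<and> walk \<omega> t = m) = m"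
      by (metis (mono_tags, lifting) LeastI)
    then have "N \<le> (LEAST t. t > 0 \<and> walk \<omega> t = m)" using h by (meson not_le)
    then show ?thesis using True by (simp add: hit_time_def)
  next
    case False
    show ?thesis unfolding hit_time_def if_not_P[OF False] by simp
  qed
qed

lemma hit_lower:
  assumes "N > 0"
  shows "pK q (N - 1) m \<le> measure (lazy_walk_space q) {\<omega> \<in> space (lazy_walk_space q). hit_time m \<omega> \<ge> enat N}"
proof -
  interpret S: prob_space "lazy_walk_space q" unfolding lazy_walk_space_def
    by (rule prob_space.prob_space_stream_space) (rule prob_space_measure_pmf)
  have eq: "{\<omega> \<in> space (lazy_walk_space q). hit_time m \<omega> \<ge> enat N} =
      {\<omega> \<in> space (lazy_walk_space q). \<forall>t. 0 < t \<and> t < N \<longrightarrow> walk \<omega> t \<noteq> m}"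
    by (simp add: hit_iff)
  have meas: "{\<omega> \<in> space (lazy_walk_space q). \<forall>t. 0 < t \<and> t < N \<longrightarrow> walk \<omega> t \<noteq> m} \<in> sets (lazy_walk_space q)"
  proof -
    have "{\<omega> \<in> space (lazy_walk_space q). \<forall>t. 0 < t \<and> t < N \<longrightarrow> walk \<omega> t \<noteq> m} =
       {\<omega> \<in> space (lazy_walk_space q). \<forall>t\<in>{..<N}. 0 < t \<longrightarrow> walk \<omega> t \<noteq> m}" by auto
    also have "\<dots> \<in> sets (lazy_walk_space q)"
      unfolding lazy_walk_space_def using walk_meas by measurable
    finally show ?thesis .
  qed
  have sub: "AK (N - 1) m \<subseteq> {\<omega> \<in> space (lazy_walk_space q). \<forall>t. 0 < t \<and> t < N \<longrightarrow> walk \<omega> t \<noteq> m}"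
  proof
    fix \<omega> assume w: "\<omega> \<in> AK (N - 1) m"
    have "walk \<omega> t \<noteq> m" if "0 < t" "t < N" for t
    proof -
      have "t \<le> N - 1" using that by simp
      then show ?thesis using w by (auto simp: AK_def)
    qed
    then show "\<omega> \<in> {\<omega> \<in> space (lazy_walk_space q). \<forall>t. 0 < t \<and> t < N \<longrightarrow> walk \<omega> t \<noteq> m}"
      by (auto simp: lazy_walk_space_def space_stream_space)
  qed
  show ?thesis unfolding pK_def eq
    by (rule S.finite_measure_mono[OF sub meas])
qed

lemma case_small:
  assumes q: "0 < q" "q < 1/2" and m: "0 < m" "m \<le> n" and n: "1 < n"
  shows "real m / (8 * real n) \<le> pK q (n^2 - 1) (int m)"
proof -
  define h where "h = pi / (4 * real n)"
  define \<mu> where "\<mu> = 1 - 2*q*(1 - cos h)"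
  define g where "g = (\<lambda>(k::nat) (a::int). if 0 \<le> a \<and> a \<le> 4 * int n then sin (h * of_int a) * \<mu>^k else 0)"
  have npos: "real n > 1" using n by simp
  have hpos: "0 < h" using npos by (simp add: h_def)
  have hL: "h * (4 * real n) = pi" using npos by (simp add: h_def)
  have hle: "h \<le> 1"
  proof -
    have "h \<le> pi / 4" unfolding h_def using npos pi_gt_zero by (intro divide_left_mono) auto
    also have "\<dots> \<le> 1" using pi_less_4 by simp
    finally show ?thesis .
  qed
  have c1: "0 \<le> 1 - cos h" by simp
  have c2: "1 - cos h \<le> h^2/2" using cos_lb[of h] by simp
  have h2: "h^2 \<le> 1" using hle hpos by (simp add: power_le_one)
  have mu_ge: "1 - h^2/2 \<le> \<mu>"
  proof -
    have "2*q*(1 - cos h) \<le> 1 * (1 - cos h)" using q c1 by (intro mult_right_mono) auto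
    then show ?thesis using c2 by (simp add: \<mu>_def)
  qed
  have mu_nn: "0 \<le> \<mu>" using mu_ge h2 by simp
  have mu_le: "\<mu> \<le> 1" using q c1 by (simp add: \<mu>_def)
  have g_nn: "0 \<le> g k a" for k a
  proof -
    have "0 \<le> sin (h * of_int a)" if "0 \<le> a" "a \<le> 4 * int n"
    proof (rule sin_ge_zero)
      show "0 \<le> h * of_int a" using hpos that by simp
      have "h * of_int a \<le> h * (4 * real n)" using hpos that by (intro mult_left_mono) auto
      then show "h * of_int a \<le> pi" using hL by simp
    qed
    then show ?thesis using mu_nn by (auto simp: g_def)
  qed
  have "g (n^2 - 1) (int m) \<le> pK q (n^2 - 1) (int m)"
  proof (rule compare)
    show "0 \<le> q" "q \<le> 1/2" using q by auto
    show "g 0 a \<le> 1" for a by (auto simp: g_def)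
    show "g k a \<le> 0" if "a \<le> 0" for k a using that by (auto simp: g_def)
    show "g (Suc k) a \<le> q * g k (a+1) + (1-2*q) * g k a + q * g k (a-1)" if a: "0 < a" for k a
    proof (cases "a < 4 * int n")
      case True
      let ?x = "h * of_int a"
      have e1: "h * of_int (a+1) = ?x + h" by (simp add: algebra_simps)
      have e2: "h * of_int (a-1) = ?x - h" by (simp add: algebra_simps)
      have "q * g k (a+1) + (1-2*q) * g k a + q * g k (a-1) =
          \<mu>^k * (q * (sin (?x + h) + sin (?x - h)) + (1 - 2*q) * sin ?x)"
        using True a unfolding g_def e1[symmetric] e2[symmetric] by (simp add: algebra_simps)
      also have "sin (?x + h) + sin (?x - h) = 2 * sin ?x * cos h" by (simp add: sin_add sin_diff)
      finally have "q * g k (a+1) + (1-2*q) * g k a + q * g k (a-1) = sin ?x * \<mu>^(Suc k)"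
        by (simp add: \<mu>_def algebra_simps)
      then show ?thesis using True a by (simp add: g_def)
    next
      case False
      have "g (Suc k) a = 0"
      proof (cases "a = 4 * int n")
        case True
        have "h * of_int a = pi" using hL True by simp
        then show ?thesis by (simp add: g_def)
      qed (use False in \<open>auto simp: g_def\<close>)
      moreover have "0 \<le> q * g k (a+1) + (1-2*q) * g k a + q * g k (a-1)"
        using q g_nn by (intro add_nonneg_nonneg mult_nonneg_nonneg) auto
      ultimately show ?thesis by simp
    qed
  qed
  moreover have "real m / (8 * real n) \<le> g (n^2 - 1) (int m)"
  proof -
    have hm: "h * real m \<le> 1"
    proof -
      have "h * real m \<le> h * real n" using m hpos by (intro mult_left_mono) auto
      also have "\<dots> = pi / 4" using npos by (simp add: h_def)
      finally show ?thesis using pi_less_4 by simp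
    qed
    have s: "h * real m / 2 \<le> sin (h * real m)" using hm hpos by (intro sin_lb) auto
    have "1 + real (n^2 - 1) * (\<mu> - 1) \<le> (1 + (\<mu> - 1))^(n^2 - 1)"
      using mu_nn by (intro Bernoulli_inequality) simp
    then have B: "1 + real (n^2 - 1) * (\<mu> - 1) \<le> \<mu>^(n^2 - 1)" by simp
    have "real (n^2 - 1) * (1 - \<mu>) \<le> real n ^ 2 * (h^2/2)"
      using mu_ge h2 mu_le by (intro mult_mono) (auto simp: of_nat_diff)
    also have "real n ^ 2 * (h^2/2) = pi^2 / 32" using npos by (simp add: h_def power_divide field_simps)
    also have "\<dots> \<le> 1/2"
    proof -
      have "pi^2 \<le> 4^2" using pi_less_4 pi_gt_zero by (intro power_mono) auto
      then show ?thesis by simp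
    qed
    finally have "1/2 \<le> \<mu>^(n^2 - 1)" using B by (simp add: algebra_simps)
    have hm0: "0 \<le> h * real m" using hpos by simp
    have sn: "0 \<le> sin (h * real m)" using s hm0 by linarith
    have "real m / (8 * real n) \<le> (h * real m / 2) * (1/2)"
    proof -
      have "real m * 2 \<le> pi * real m" using pi_ge_two mult_right_mono[of 2 pi "real m"] by simp
      then show ?thesis using npos by (simp add: h_def field_simps)
    qed
    also have "\<dots> \<le> sin (h * real m) * \<mu>^(n^2 - 1)"
      using sn s \<open>1/2 \<le> \<mu>^(n^2 - 1)\<close> hpos mult_nonneg_nonneg[of h "real m"] by (intro mult_mono) auto
    also have "\<dots> = g (n^2 - 1) (int m)" using m by (simp add: g_def)
    finally show ?thesis .
  qed
  ultimately show ?thesis by linarith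
qed

lemma case_large:
  assumes q: "0 < q" "q < 1/2" and m: "n < m" and n: "1 < n"
  shows "1 - exp (- real m / (8 * real n)) \<le> pK q (n^2 - 1) (int m)"
proof -
  define l where "l = 1 / (2 * real n)"
  define \<rho> where "\<rho> = q * exp (-l) + (1 - 2*q) + q * exp l"
  define g where "g = (\<lambda>(k::nat) (a::int). 1 - exp (- l * of_int a) * \<rho>^k)"
  have npos: "real n > 1" using n by simp
  have lpos: "0 < l" using npos by (simp add: l_def)
  have lle: "l \<le> 1" using npos by (simp add: l_def)
  have rho_eq: "\<rho> = 1 + q * (exp l + exp (-l) - 2)" by (simp add: \<rho>_def algebra_simps)
  have sum_ge: "2 \<le> exp l + exp (-l)"
    using exp_ge_add_one_self[of l] exp_ge_add_one_self[of "-l"] by linarith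
  have rho_ge: "1 \<le> \<rho>" using rho_eq sum_ge q by simp
  have rho_le: "\<rho> \<le> exp (l^2)"
  proof -
    have "q * (exp l + exp (-l) - 2) \<le> (1/2) * (2 * l^2)"
      using q sum_ge exp_sum_bound[of l] lpos lle by (intro mult_mono) auto
    then have "\<rho> \<le> 1 + l^2" using rho_eq by simp
    also have "\<dots> \<le> exp (l^2)" by (rule exp_ge_add_one_self)
    finally show ?thesis .
  qed
  have "g (n^2 - 1) (int m) \<le> pK q (n^2 - 1) (int m)"
  proof (rule compare)
    show "0 \<le> q" "q \<le> 1/2" using q by auto
    show "g 0 a \<le> 1" for a by (simp add: g_def)
    show "g k a \<le> 0" if "a \<le> 0" for k a
    proof -
      have "1 \<le> exp (- l * of_int a)" using that lpos by (simp add: mult_nonneg_nonpos)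
      moreover have "1 \<le> \<rho>^k" using rho_ge by (simp add: one_le_power)
      ultimately have "1 \<le> exp (- l * of_int a) * \<rho>^k"
        using mult_mono[of 1 "exp (- l * of_int a)" 1 "\<rho>^k"] by simp
      then show ?thesis by (simp add: g_def)
    qed
    show "g (Suc k) a \<le> q * g k (a+1) + (1-2*q) * g k a + q * g k (a-1)" for k a
    proof -
      have e1: "exp (- l * of_int (a+1)) = exp (- l * of_int a) * exp (-l)"
        by (simp add: exp_add[symmetric] algebra_simps)
      have e2: "exp (- l * of_int (a-1)) = exp (- l * of_int a) * exp l"
        by (simp add: exp_add[symmetric] algebra_simps)
      have "q * g k (a+1) + (1-2*q) * g k a + q * g k (a-1) = 1 - exp (- l * of_int a) * \<rho>^k * \<rho>"
        unfolding g_def e1 e2 \<rho>_def by (simp add: algebra_simps)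
      then show ?thesis by (simp add: g_def algebra_simps)
    qed
  qed
  moreover have "1 - exp (- real m / (8 * real n)) \<le> g (n^2 - 1) (int m)"
  proof -
    have "\<rho>^(n^2 - 1) \<le> exp (l^2) ^ (n^2 - 1)"
      using rho_ge rho_le by (intro power_mono) auto
    also have "\<dots> = exp (real (n^2 - 1) * l^2)" by (simp add: exp_of_nat_mult[symmetric])
    also have "\<dots> \<le> exp (1/4)"
    proof -
      have "real (n^2 - 1) * l^2 \<le> real n ^ 2 * l^2"
        by (intro mult_right_mono) (auto simp: of_nat_diff)
      also have "\<dots> = 1/4" using npos by (simp add: l_def power_divide field_simps)
      finally show ?thesis by simp
    qed
    finally have R: "\<rho>^(n^2 - 1) \<le> exp (1/4)" .
    have "exp (- l * real m) * \<rho>^(n^2 - 1) \<le> exp (- l * real m) * exp (1/4)"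
      using R by (intro mult_left_mono) auto
    also have "\<dots> = exp (1/4 - real m / (2 * real n))" by (simp add: exp_add[symmetric] l_def)
    also have "\<dots> \<le> exp (- real m / (8 * real n))"
    proof -
      have "real n < real m" using m by simp
      then have "1/4 - real m / (2 * real n) \<le> - real m / (8 * real n)"
        using npos by (simp add: field_simps)
      then show ?thesis by simp
    qed
    finally show ?thesis by (simp add: g_def)
  qed
  ultimately show ?thesis by linarith
qed

theorem corollary2p3:
  shows "\<exists>c::real. 0 < c \<and> c \<le> 1/2 \<and>
    (\<forall>q::real. 0 < q \<and> q < 1/2 \<longrightarrow>
      (\<forall>m::nat. m > 0 \<longrightarrow>
        (\<forall>n::nat. n > 1 \<longrightarrow>
          measure (lazy_walk_space q)
            {\<omega> \<in> space (lazy_walk_space q). hit_time (int m) \<omega> \<ge> enat (n^2)}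
          \<ge> 1 - exp (- c * real m / real n))))"
proof (intro exI[of _ "1/8"] conjI allI impI)
  fix q :: real and m n :: nat
  assume q: "0 < q \<and> q < 1/2" and m: "m > 0" and n: "n > 1"
  have N: "n^2 > 0" using n by simp
  have e: "- (1/8) * real m / real n = - real m / (8 * real n)" by simp
  have "1 - exp (- real m / (8 * real n)) \<le> pK q (n^2 - 1) (int m)"
  proof (cases "m \<le> n")
    case True
    have "1 - exp (- real m / (8 * real n)) \<le> real m / (8 * real n)"
      using exp_ge_add_one_self[of "- real m / (8 * real n)"] by simp
    also have "\<dots> \<le> pK q (n^2 - 1) (int m)" using case_small[of q m n] q m n True by simp
    finally show ?thesis .
  next
    case False
    then show ?thesis using case_large[of q n m] q n by simp
  qed
  also have "\<dots> \<le> measure (lazy_walk_space q)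
            {\<omega> \<in> space (lazy_walk_space q). hit_time (int m) \<omega> \<ge> enat (n^2)}"
    using hit_lower[OF N, of q "int m"] by simp
  finally show "1 - exp (- (1/8) * real m / real n) \<le> measure (lazy_walk_space q)
            {\<omega> \<in> space (lazy_walk_space q). hit_time (int m) \<omega> \<ge> enat (n^2)}"
    unfolding e .
qed simp_all

end
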